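(* Let $n\geqslant 1$, let $B=\{g,e\}$ and let $Q$ be the set of monoid relations on $B$: (Q1) $g^n=1$; (Q2) $e^2=e$; (Q3) $eg^{n-j+i}eg^{n-i+j}=g^{n-j+i}eg^{n-i+j}e$ for $1\leqslant i<j\leqslant n$; (Q4) $g(eg^{n-1})^n=(eg^{n-1})^n$. Then $\langle B\mid Q\rangle$ is a monoid presentation of $\mathcal{CI}_n$ with respect to the map $g\mapsto g$, $e\mapsto e_1$. It has $2$ generators and $\frac12(n^2-n+6)$ relations.
   Context: Let $\Omega_n=\{1,\ldots,n\}$, $\mathcal{I}_n$ the symmetric inverse monoid on $\Omega_n$ (maps on the right, composed left to right). $g$ is the permutation $ig=i+1$ ($1\leqslant i\leqslant n-1$), $ng=1$; $\mathcal{C}_n=\{1,g,\ldots,g^{n-1}\}$; $\mathcal{CI}_n=\{\alpha\in\mathcal{I}_n\mid \alpha=\sigma|_{\mathrm{Dom}(\alpha)}\text{ for some }\sigma\in\mathcal{C}_n\}$; $e_1$ is the partial identity on $\Omega_n\setminus\{1\}$. A presentation $\langle B\mid Q\rangle$ defines a monoid $M$ via a map $\phi:B\to M$ if $\phi$ is injective, $B\phi$ generates $M$, and the induced homomorphism $B^*\to M$ has kernel equal to the smallest congruence on $B^*$ containing $Q$. *)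

theory Defs
  imports Main
begin

type_synonym pmap = "nat \<Rightarrow> nat option"

text \<open>Composition with maps on the right: x (a \<cdot> b) = (x a) b, i.e. first a, then b.\<close>
definition pcomp :: "pmap \<Rightarrow> pmap \<Rightarrow> pmap" where
  "pcomp a b = b \<circ>\<^sub>m a"

definition pid :: "nat \<Rightarrow> pmap" where
  "pid n = (\<lambda>i. if i \<in> {1..n} then Some i else None)"

definition sym_inv :: "nat \<Rightarrow> pmap set" where
  "sym_inv n = {\<alpha>. dom \<alpha> \<subseteq> {1..n} \<and> ran \<alpha> \<subseteq> {1..n} \<and> inj_on \<alpha> (dom \<alpha>)}"

definition gperm :: "nat \<Rightarrow> pmap" where
  "gperm n = (\<lambda>i. if 1 \<le> i \<and> i < n then Some (i + 1) else if i = n \<and> 1 \<le> n then Some 1 else None)"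

primrec ppow :: "nat \<Rightarrow> pmap \<Rightarrow> nat \<Rightarrow> pmap" where
  "ppow n a 0 = pid n"
| "ppow n a (Suc k) = pcomp (ppow n a k) a"

definition cyc :: "nat \<Rightarrow> pmap set" where
  "cyc n = {ppow n (gperm n) k | k. k < n}"

definition CI :: "nat \<Rightarrow> pmap set" where
  "CI n = {\<alpha> \<in> sym_inv n. \<exists>\<sigma> \<in> cyc n. \<alpha> = \<sigma> |` dom \<alpha>}"

definition e1 :: "nat \<Rightarrow> pmap" where
  "e1 n = pid n |` ({1..n} - {1})"

definition word_eval :: "('m \<Rightarrow> 'm \<Rightarrow> 'm) \<Rightarrow> 'm \<Rightarrow> ('b \<Rightarrow> 'm) \<Rightarrow> 'b list \<Rightarrow> 'm" where
  "word_eval mult one \<phi> w = foldl (\<lambda>acc x. mult acc (\<phi> x)) one w"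

inductive rel_cong :: "('b list \<times> 'b list) set \<Rightarrow> 'b list \<Rightarrow> 'b list \<Rightarrow> bool"
  for Q where
  base: "(u, v) \<in> Q \<Longrightarrow> rel_cong Q u v"
| refl: "rel_cong Q u u"
| sym: "rel_cong Q u v \<Longrightarrow> rel_cong Q v u"
| trans: "rel_cong Q u v \<Longrightarrow> rel_cong Q v w \<Longrightarrow> rel_cong Q u w"
| ctxt: "rel_cong Q u v \<Longrightarrow> rel_cong Q (x @ u @ y) (x @ v @ y)"

definition defines_monoid ::
  "('b list \<times> 'b list) set \<Rightarrow> 'm set \<Rightarrow> ('m \<Rightarrow> 'm \<Rightarrow> 'm) \<Rightarrow> 'm \<Rightarrow> ('b \<Rightarrow> 'm) \<Rightarrow> bool" where
  "defines_monoid Q M mult one \<phi> \<longleftrightarrow>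
     inj \<phi> \<and>
     M = range (word_eval mult one \<phi>) \<and>
     (\<forall>u v. word_eval mult one \<phi> u = word_eval mult one \<phi> v \<longleftrightarrow> rel_cong Q u v)"

datatype gen = G | E

abbreviation gp :: "nat \<Rightarrow> gen list" where
  "gp k \<equiv> replicate k G"

definition phiCI :: "nat \<Rightarrow> gen \<Rightarrow> pmap" where
  "phiCI n x = (case x of G \<Rightarrow> gperm n | E \<Rightarrow> e1 n)"

text \<open>Relations (Q1)-(Q4), as a list (with multiplicities, indexed as in the paper).\<close>
definition Q3rel :: "nat \<Rightarrow> nat \<Rightarrow> nat \<Rightarrow> gen list \<times> gen list" where
  "Q3rel n i j = ([E] @ gp (n - j + i) @ [E] @ gp (n - i + j),
                  gp (n - j + i) @ [E] @ gp (n - i + j) @ [E])"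

definition Qlist :: "nat \<Rightarrow> (gen list \<times> gen list) list" where
  "Qlist n =
     [(gp n, [])] @
     [([E, E], [E])] @
     [Q3rel n i j. i \<leftarrow> [1..<n+1], j \<leftarrow> [i+1..<n+1]] @
     [([G] @ concat (replicate n ([E] @ gp (n - 1))), concat (replicate n ([E] @ gp (n - 1))))]"

end

theory Submission
  imports Defs "HOL-Number_Theory.Cong"
begin


definition rot :: "nat \<Rightarrow> nat \<Rightarrow> nat \<Rightarrow> nat" where
  "rot n k x = (x - 1 + k) mod n + 1"

definition sem :: "nat \<Rightarrow> nat \<Rightarrow> nat set \<Rightarrow> pmap" where
  "sem n k D = (\<lambda>x. if x \<in> D \<and> 1 \<le> x \<and> x \<le> n then Some (rot n k x) else None)"

lemma rot_rot: "rot n k' (rot n k x) = rot n (k + k') x"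
  unfolding rot_def by (simp add: mod_add_left_eq add.assoc)

lemma pcomp_assoc: "pcomp (pcomp a b) c = pcomp a (pcomp b c)"
  unfolding pcomp_def by (auto simp: map_comp_def fun_eq_iff split: option.splits)

locale CIn = fixes n :: nat assumes n1: "n \<ge> 1"
begin

lemma rot_range: "1 \<le> rot n k x \<and> rot n k x \<le> n"
  using n1 unfolding rot_def by (simp add: Suc_leI)

lemma rot_mod: "rot n k x = rot n (k mod n) x"
  unfolding rot_def by (simp add: mod_add_right_eq)

lemma rot0: "1 \<le> x \<Longrightarrow> x \<le> n \<Longrightarrow> rot n 0 x = x"
  unfolding rot_def by simp

lemma rot_multn: "1 \<le> x \<Longrightarrow> x \<le> n \<Longrightarrow> rot n (m * n) x = x"
  using rot_mod[of "m*n" x] rot0 by simp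

lemma pcomp_sem: "pcomp (sem n k D) (sem n k' D') = sem n (k + k') {x \<in> D. rot n k x \<in> D'}"
  using rot_range unfolding pcomp_def sem_def by (auto simp: map_comp_def fun_eq_iff rot_rot)

lemma sem_eq: "D \<inter> {1..n} = D' \<inter> {1..n} \<Longrightarrow> k mod n = k' mod n \<Longrightarrow> sem n k D = sem n k' D'"
  unfolding sem_def fun_eq_iff by (metis (no_types, lifting) Int_iff atLeastAtMost_iff rot_mod)

lemma sem_empty: "sem n k {} = Map.empty"
  unfolding sem_def by simp

lemma pid_sem: "pid n = sem n 0 UNIV"
  unfolding pid_def sem_def fun_eq_iff by (auto simp: rot0)

lemma gperm_sem: "gperm n = sem n 1 UNIV"
  unfolding gperm_def sem_def fun_eq_iff rot_def using n1 by auto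

lemma e1_sem: "e1 n = sem n 0 (-{1})"
  unfolding e1_def pid_def sem_def fun_eq_iff by (auto simp: rot0 restrict_map_def)

lemma phi_sem: "\<exists>k D. phiCI n x = sem n k D"
  by (cases x) (auto simp: phiCI_def gperm_sem e1_sem)

abbreviation ev :: "gen list \<Rightarrow> pmap" where
  "ev \<equiv> word_eval pcomp (pid n) (phiCI n)"

lemma foldl_sem: "\<exists>k' D'. foldl (\<lambda>acc x. pcomp acc (phiCI n x)) (sem n k D) v = sem n k' D'"
proof (induction v arbitrary: k D)
  case Nil then show ?case by auto
next
  case (Cons x v)
  obtain k1 D1 where "phiCI n x = sem n k1 D1" using phi_sem by blast
  then show ?case using Cons by (simp add: pcomp_sem)
qed

lemma ev_sem: "\<exists>k D. ev w = sem n k D"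
  unfolding word_eval_def pid_sem by (rule foldl_sem)

lemma foldl_ev: "foldl (\<lambda>acc x. pcomp acc (phiCI n x)) (sem n k D) v = pcomp (sem n k D) (ev v)"
proof (induction v arbitrary: k D)
  case Nil
  then show ?case by (simp add: word_eval_def pid_sem pcomp_sem)
next
  case (Cons x v)
  obtain k1 D1 where p: "phiCI n x = sem n k1 D1" using phi_sem by blast
  have "foldl (\<lambda>acc x. pcomp acc (phiCI n x)) (sem n k D) (x # v)
     = pcomp (pcomp (sem n k D) (sem n k1 D1)) (ev v)"
    using Cons p by (simp add: pcomp_sem)
  moreover have "ev (x # v) = pcomp (sem n k1 D1) (ev v)"
  proof -
    have "ev (x # v) = foldl (\<lambda>acc x. pcomp acc (phiCI n x)) (pcomp (sem n 0 UNIV) (sem n k1 D1)) v"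
      by (simp add: word_eval_def pid_sem p)
    also have "pcomp (sem n 0 UNIV) (sem n k1 D1) = sem n k1 D1"
      by (simp add: pcomp_sem) (rule sem_eq; auto simp: rot0)
    finally show ?thesis using Cons by simp
  qed
  ultimately show ?case by (simp add: pcomp_assoc)
qed

lemma ev_append: "ev (u @ v) = pcomp (ev u) (ev v)"
proof -
  obtain k D where "ev u = sem n k D" using ev_sem by blast
  then show ?thesis using foldl_ev[of k D v] by (simp add: word_eval_def)
qed

lemma ev_Nil: "ev [] = sem n 0 UNIV"
  by (simp add: word_eval_def pid_sem)

lemma ev_G: "ev [G] = sem n 1 UNIV"
  by (simp add: word_eval_def pid_sem phiCI_def gperm_sem pcomp_sem)

lemma ev_E: "ev [E] = sem n 0 (-{1})"
  by (simp add: word_eval_def pid_sem phiCI_def e1_sem pcomp_sem) (rule sem_eq; auto simp: rot0)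

lemma ev_gp: "ev (gp k) = sem n k UNIV"
proof (induction k)
  case 0 then show ?case by (simp add: ev_Nil)
next
  case (Suc k)
  have "gp (Suc k) = gp k @ [G]" by (simp add: replicate_append_same)
  then show ?case using Suc by (simp add: ev_append ev_G pcomp_sem)
qed

end


context CIn begin

definition Ei :: "nat \<Rightarrow> gen list" where
  "Ei i = gp (n - i + 1) @ [E] @ gp (i - 1)"

definition Wl :: "(nat \<Rightarrow> bool) \<Rightarrow> nat \<Rightarrow> nat \<Rightarrow> gen list" where
  "Wl P l m = concat (map Ei (filter P [l..<m]))"

definition nf :: "nat \<Rightarrow> (nat \<Rightarrow> bool) \<Rightarrow> gen list" where
  "nf k P = gp k @ Wl P 1 (n+1)"

lemma rot_eq1: "1 \<le> x \<Longrightarrow> x \<le> n \<Longrightarrow> 1 \<le> i \<Longrightarrow> i \<le> n \<Longrightarrow> rot n (n - i + 1) x = 1 \<longleftrightarrow> x = i"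
  unfolding rot_def
proof -
  assume a: "1 \<le> x" "x \<le> n" "1 \<le> i" "i \<le> n"
  show "((x - 1 + (n - i + 1)) mod n + 1 = 1) = (x = i)"
  proof (cases "x \<ge> i")
    case True
    then have "x - 1 + (n - i + 1) = (x - i) + n" using a by simp
    moreover have "x - i < n" using a by simp
    ultimately have "(x - 1 + (n - i + 1)) mod n = x - i" by simp
    then show ?thesis using a True by simp
  next
    case False
    then have "x - 1 + (n - i + 1) < n" "x - 1 + (n - i + 1) > 0" using a by auto
    then show ?thesis using False by simp
  qed
qed

lemma rot_eq1': "1 \<le> x \<Longrightarrow> x \<le> n \<Longrightarrow> 1 \<le> i \<Longrightarrow> i \<le> n \<Longrightarrow> rot n (Suc (n - i)) x = Suc 0 \<longleftrightarrow> x = i"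
  using rot_eq1 by simp

lemma ev_Ei: "1 \<le> i \<Longrightarrow> i \<le> n \<Longrightarrow> ev (Ei i) = sem n 0 (-{i})"
  unfolding Ei_def
  by (simp only: ev_append ev_gp ev_E pcomp_sem) (rule sem_eq; auto simp: rot_eq1' rot_multn[of _ 1, simplified])

lemma ev_Eis: "set L \<subseteq> {1..n} \<Longrightarrow> ev (concat (map Ei L)) = sem n 0 (- set L)"
proof (induction L)
  case Nil then show ?case by (simp add: ev_Nil)
next
  case (Cons i L)
  then show ?case
    by (simp add: ev_append ev_Ei pcomp_sem) (rule sem_eq; auto simp: rot0)
qed

lemma ev_nf: "ev (nf k P) = sem n k {x. \<not> P (rot n k x)}"
proof -
  have st: "set (filter P [1..<n+1]) = {x. P x \<and> 1 \<le> x \<and> x \<le> n}" by auto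
  have "ev (Wl P 1 (n+1)) = sem n 0 (- {x. P x \<and> 1 \<le> x \<and> x \<le> n})"
    unfolding Wl_def st[symmetric] by (rule ev_Eis) auto
  then show ?thesis unfolding nf_def
    by (simp only: ev_append ev_gp pcomp_sem) (rule sem_eq; insert rot_range; auto)
qed

lemma rot_sub: "1 \<le> x \<Longrightarrow> x \<le> n \<Longrightarrow> m < x \<Longrightarrow> rot n (m * (n - Suc 0)) x = x - m"
proof -
  assume a: "1 \<le> x" "x \<le> n" "m < x"
  have "m * (n - 1) = m * n - m" by (simp add: diff_mult_distrib2)
  moreover have "m * n \<ge> m" using n1 by simp
  ultimately have "x - 1 + m * (n - 1) = (x - 1 - m) + m * n" using a by simp
  moreover have "x - 1 - m < n" using a by simp
  ultimately have "(x - 1 + m * (n - 1)) mod n = x - 1 - m" by simp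
  then show ?thesis unfolding rot_def using a by simp
qed

lemma ev_Q4w: "m \<le> n \<Longrightarrow> ev (concat (replicate m ([E] @ gp (n - 1)))) = sem n (m * (n - 1)) {x. m < x}"
proof (induction m)
  case 0 then show ?case by (simp add: ev_Nil) (rule sem_eq; auto)
next
  case (Suc m)
  have r: "replicate (Suc m) ([E] @ gp (n - 1)) = replicate m ([E] @ gp (n - 1)) @ [[E] @ gp (n - 1)]"
    by (simp add: replicate_append_same)
  have cm: "m * (n - Suc 0) + n - Suc 0 = n + m * (n - Suc 0) - Suc 0" by simp
  show ?case using Suc unfolding r
    by (simp only: concat_append ev_append ev_E ev_gp pcomp_sem concat.simps append_Nil2)
      (rule sem_eq; use n1 in \<open>auto simp: rot_sub cm\<close>)
qed

lemma sem_empty': "D \<inter> {1..n} = {} \<Longrightarrow> sem n k D = Map.empty"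
  unfolding sem_def by (auto simp: fun_eq_iff)

lemma Q_sound: "(u, v) \<in> set (Qlist n) \<Longrightarrow> ev u = ev v"
proof -
  assume "(u, v) \<in> set (Qlist n)"
  then consider "u = gp n" "v = []" | "u = [E,E]" "v = [E]"
    | i j where "1 \<le> i" "i < j" "j \<le> n" "(u, v) = Q3rel n i j"
    | "u = [G] @ concat (replicate n ([E] @ gp (n - 1)))" "v = concat (replicate n ([E] @ gp (n - 1)))"
    unfolding Qlist_def by (auto simp: less_Suc_eq_le Suc_le_eq)
  then show ?thesis
  proof cases
    case 1 then show ?thesis by (simp add: ev_gp ev_Nil) (rule sem_eq; auto)
  next
    case 2
    have "ev [E,E] = ev ([E] @ [E])" by simp
    then show ?thesis using 2 by (simp only: ev_append ev_E pcomp_sem) (rule sem_eq; auto simp: rot0)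
  next
    case (3 i j)
    have s: "n - j + i + (n - i + j) = 2 * n" using 3 by simp
    have r2: "\<And>x. 1 \<le> x \<Longrightarrow> x \<le> n \<Longrightarrow> rot n (n - j + i + (n - i + j)) x = x"
      unfolding s using rot_multn[of _ 2] by (simp add: mult.commute)
    show ?thesis using 3(4) unfolding Q3rel_def
      by (simp only: ev_append ev_E ev_gp pcomp_sem rot_rot prod.inject) (rule sem_eq; auto simp: rot0 r2 rot_rot)
  next
    case 4
    have a: "ev v = Map.empty" using 4 ev_Q4w[of n] by (simp, intro sem_empty', auto)
    have "ev u = Map.empty" using 4 ev_Q4w[of n]
      by (simp only: ev_append ev_G pcomp_sem) (rule sem_empty'; auto; metis rot_range not_le)
    then show ?thesis using a by simp
  qed
qed

lemma sound: "rel_cong (set (Qlist n)) u v \<Longrightarrow> ev u = ev v"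
  by (induction rule: rel_cong.induct) (auto simp: Q_sound ev_append)

end


context CIn begin

abbreviation RR :: "gen list \<Rightarrow> gen list \<Rightarrow> bool" where
  "RR \<equiv> rel_cong (set (Qlist n))"

lemma rc_app: "RR u v \<Longrightarrow> RR u' v' \<Longrightarrow> RR (u @ u') (v @ v')"
proof -
  assume a: "RR u v" "RR u' v'"
  have "RR ([] @ u @ u') ([] @ v @ u')" by (rule rel_cong.ctxt[OF a(1)])
  moreover have "RR (v @ u' @ []) (v @ v' @ [])" by (rule rel_cong.ctxt[OF a(2)])
  ultimately show ?thesis by (auto intro: rel_cong.trans)
qed

lemma rc_app3: "RR u v \<Longrightarrow> RR (x @ u @ y) (x @ v @ y)"
  by (rule rel_cong.ctxt)

lemma gp_add: "gp a @ gp b @ xs = gp (a + b) @ xs"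
  by (simp add: replicate_add)

lemma gp_add2: "gp a @ gp b = gp (a + b)"
  by (simp add: replicate_add)

lemma rc_gpn: "RR (gp n) []"
  by (rule rel_cong.base) (simp add: Qlist_def)

lemma rc_gp_mult: "RR (gp (m * n + r)) (gp r)"
proof (induction m)
  case 0 then show ?case by (simp add: rel_cong.refl)
next
  case (Suc m)
  have "gp (Suc m * n + r) = gp n @ gp (m * n + r)"
    by (simp add: replicate_add[symmetric] add.assoc)
  moreover have "RR (gp n @ gp (m * n + r)) ([] @ gp r)"
    by (rule rc_app[OF rc_gpn Suc])
  ultimately show ?case by simp
qed

lemma rc_gp_mod: "a mod n = b mod n \<Longrightarrow> RR (gp a) (gp b)"
proof -
  assume h: "a mod n = b mod n"
  have "RR (gp a) (gp (a mod n))" using rc_gp_mult[of "a div n" "a mod n"] by simp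
  moreover have "RR (gp b) (gp (b mod n))" using rc_gp_mult[of "b div n" "b mod n"] by simp
  ultimately show ?thesis using h by (metis rel_cong.sym rel_cong.trans)
qed

lemma rc_EE: "RR [E, E] [E]"
  by (rule rel_cong.base) (simp add: Qlist_def)

lemma rc_Q3: "1 \<le> i \<Longrightarrow> i < j \<Longrightarrow> j \<le> n \<Longrightarrow>
   RR ([E] @ gp (n - j + i) @ [E] @ gp (n - i + j)) (gp (n - j + i) @ [E] @ gp (n - i + j) @ [E])"
  by (rule rel_cong.base) (force simp: Qlist_def Q3rel_def)

lemma rc_Q4: "RR ([G] @ concat (replicate n ([E] @ gp (n - 1)))) (concat (replicate n ([E] @ gp (n - 1))))"
  by (rule rel_cong.base) (simp add: Qlist_def)

lemma rc_gp3: "a mod n = a' mod n \<Longrightarrow> c mod n = c' mod n \<Longrightarrow>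
  RR (gp a @ [E] @ gp b @ [E] @ gp c) (gp a' @ [E] @ gp b @ [E] @ gp c')"
proof -
  assume h1: "a mod n = a' mod n" and h2: "c mod n = c' mod n"
  show ?thesis
    using rc_app[OF rc_gp_mod[OF h1] rc_app[OF rel_cong.refl[of _ "[E] @ gp b @ [E]"] rc_gp_mod[OF h2]]]
    by simp
qed

lemma Ei_idem: "1 \<le> i \<Longrightarrow> i \<le> n \<Longrightarrow> RR (Ei i @ Ei i) (Ei i)"
proof -
  assume a: "1 \<le> i" "i \<le> n"
  have s: "i - 1 + (n - i + 1) = n" using a by simp
  have e: "Ei i @ Ei i = gp (n - i + 1) @ [E] @ gp n @ [E] @ gp (i - 1)"
    unfolding Ei_def by (simp only: append_assoc gp_add s)
  have c1: "RR (gp (n - i + 1) @ [E] @ gp n @ [E] @ gp (i - 1)) (gp (n - i + 1) @ [E] @ [] @ [E] @ gp (i - 1))"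
    using rc_app[OF rel_cong.refl[of _ "gp (n-i+1) @ [E]"] rc_app[OF rc_gpn rel_cong.refl[of _ "[E] @ gp (i-1)"]]]
    by simp
  have c2: "RR (gp (n - i + 1) @ [E, E] @ gp (i - 1)) (gp (n - i + 1) @ [E] @ gp (i - 1))"
    by (rule rc_app3[OF rc_EE])
  have c3: "RR (Ei i @ Ei i) (gp (n - i + 1) @ [E, E] @ gp (i - 1))"
    using c1 unfolding e by simp
  show ?thesis using rel_cong.trans[OF c3 c2] unfolding Ei_def .
qed

lemma Ei_comm: "1 \<le> i \<Longrightarrow> i < j \<Longrightarrow> j \<le> n \<Longrightarrow> RR (Ei i @ Ei j) (Ei j @ Ei i)"
proof -
  assume a: "1 \<le> i" "i < j" "j \<le> n"
  define A where "A = n - j + i"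
  define B where "B = n - i + j"
  have s1: "i - 1 + (n - j + 1) = A" using a A_def by simp
  have s2: "j - 1 + (n - i + 1) = B" using a B_def by simp
  have e1: "Ei i @ Ei j = gp (n - i + 1) @ ([E] @ gp A @ [E]) @ gp (j - 1)"
    unfolding Ei_def s1[symmetric] by (simp only: append_assoc gp_add[symmetric])
  have e2: "Ei j @ Ei i = gp (n - j + 1) @ [E] @ gp B @ [E] @ gp (i - 1)"
    unfolding Ei_def s2[symmetric] by (simp only: append_assoc gp_add[symmetric])
  have c1: "RR ([E] @ gp A @ [E]) ([E] @ gp A @ [E] @ gp B @ gp A)"
  proof -
    have "RR ([E] @ gp A @ [E] @ gp (B + A)) ([E] @ gp A @ [E] @ gp 0)"
    proof -
      have "(B + A) mod n = 0 mod n" using a A_def B_def by simp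
      from rc_app[OF rel_cong.refl[of _ "[E] @ gp A @ [E]"] rc_gp_mod[OF this]] show ?thesis by simp
    qed
    then show ?thesis by (simp only: replicate_add append_assoc append_Nil2 replicate_0) (rule rel_cong.sym)
  qed
  have c2: "RR ([E] @ gp A @ [E] @ gp B @ gp A) (gp A @ [E] @ gp B @ [E] @ gp A)"
    using rc_app[OF rc_Q3[OF a, folded A_def B_def] rel_cong.refl[of _ "gp A"]] by simp
  have c3: "RR (gp (n - i + 1) @ ([E] @ gp A @ [E]) @ gp (j - 1))
               (gp (n - i + 1) @ (gp A @ [E] @ gp B @ [E] @ gp A) @ gp (j - 1))"
    by (rule rc_app3, rule rel_cong.trans[OF c1 c2])
  have e3: "gp (n - i + 1) @ (gp A @ [E] @ gp B @ [E] @ gp A) @ gp (j - 1)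
      = gp (n - i + 1 + A) @ [E] @ gp B @ [E] @ gp (A + (j - 1))"
    by (simp only: append_assoc gp_add gp_add2)
  have c4: "RR (gp (n - i + 1 + A) @ [E] @ gp B @ [E] @ gp (A + (j - 1)))
               (gp (n - j + 1) @ [E] @ gp B @ [E] @ gp (i - 1))"
  proof (rule rc_gp3)
    have h1: "n - i + 1 + A = (n - j + 1) + n" using a A_def by simp
    show "(n - i + 1 + A) mod n = (n - j + 1) mod n" unfolding h1 by (rule mod_add_self2)
    have h2: "A + (j - 1) = (i - 1) + n" using a A_def by simp
    show "(A + (j - 1)) mod n = (i - 1) mod n" unfolding h2 by (rule mod_add_self2)
  qed
  have c5: "RR (Ei i @ Ei j) (gp (n - i + 1 + A) @ [E] @ gp B @ [E] @ gp (A + (j - 1)))"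
    using c3 unfolding e1 e3 .
  show ?thesis unfolding e2 by (rule rel_cong.trans[OF c5 c4])
qed

lemma Ei_shift: "k < n \<Longrightarrow> RR ([E] @ gp k) (gp k @ Ei (k + 1))"
proof -
  assume a: "k < n"
  have s: "n - (k + 1) + 1 = n - k" "k + 1 - 1 = k" using a by auto
  have "gp k @ Ei (k + 1) = gp (k + (n - k)) @ [E] @ gp k"
    unfolding Ei_def by (simp only: append_assoc gp_add s)
  moreover have "RR (gp 0 @ [E] @ gp k) (gp (k + (n - k)) @ [E] @ gp k)"
  proof -
    have "0 mod n = (k + (n - k)) mod n" using a by simp
    from rc_app[OF rc_gp_mod[OF this] rel_cong.refl] show ?thesis by simp
  qed
  ultimately show ?thesis by simp
qed

end


context CIn begin

lemma Wl_cons: "l < m \<Longrightarrow> Wl P l m = (if P l then Ei l @ Wl P (Suc l) m else Wl P (Suc l) m)"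
  by (simp add: Wl_def upt_conv_Cons)

lemma Wl_cong: "(\<And>i. l \<le> i \<Longrightarrow> i < m \<Longrightarrow> P i = P' i) \<Longrightarrow> Wl P l m = Wl P' l m"
  unfolding Wl_def by (intro arg_cong[where f="\<lambda>L. concat (map Ei L)"] filter_cong) auto

lemma ins: "1 \<le> l \<Longrightarrow> l \<le> x \<Longrightarrow> x < m \<Longrightarrow> m \<le> n + 1 \<Longrightarrow>
   RR (Ei x @ Wl P l m) (Wl (\<lambda>i. P i \<or> i = x) l m)"
proof (induction "m - l" arbitrary: l)
  case 0 then show ?case by simp
next
  case (Suc d)
  have lm: "l < m" using Suc by simp
  let ?P' = "\<lambda>i. P i \<or> i = x"
  show ?case
  proof (cases "x = l")
    case True
    have wc: "Wl ?P' (Suc l) m = Wl P (Suc l) m" by (rule Wl_cong) (use True in auto)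
    have r: "Wl ?P' l m = Ei l @ Wl P (Suc l) m" using Wl_cons[OF lm, of ?P'] True wc by simp
    show ?thesis
    proof (cases "P l")
      case True
      have "RR (Ei l @ Ei l @ Wl P (Suc l) m) (Ei l @ Wl P (Suc l) m)"
        using rc_app[OF Ei_idem rel_cong.refl, of l "Wl P (Suc l) m"] Suc.prems by simp
      then show ?thesis using Wl_cons[OF lm, of P] True r \<open>x = l\<close> by simp
    next
      case False
      then show ?thesis using Wl_cons[OF lm, of P] r \<open>x = l\<close> by (simp add: rel_cong.refl)
    qed
  next
    case False
    then have xl: "l < x" using Suc.prems by simp
    have IH: "RR (Ei x @ Wl P (Suc l) m) (Wl ?P' (Suc l) m)"
      using Suc xl by simp
    have r: "Wl ?P' l m = (if P l then Ei l @ Wl ?P' (Suc l) m else Wl ?P' (Suc l) m)"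
      using Wl_cons[OF lm, of ?P'] xl by simp
    show ?thesis
    proof (cases "P l")
      case True
      have c1: "RR (Ei x @ Ei l @ Wl P (Suc l) m) (Ei l @ Ei x @ Wl P (Suc l) m)"
        using rc_app[OF rel_cong.sym[OF Ei_comm[of l x]] rel_cong.refl, of "Wl P (Suc l) m"] Suc.prems xl
        by simp
      have c2: "RR (Ei l @ Ei x @ Wl P (Suc l) m) (Ei l @ Wl ?P' (Suc l) m)"
        using rc_app[OF rel_cong.refl IH, of "Ei l"] by simp
      show ?thesis using rel_cong.trans[OF c1 c2] Wl_cons[OF lm, of P] True r by simp
    next
      case False
      then show ?thesis using IH Wl_cons[OF lm, of P] r by simp
    qed
  qed
qed

lemma red: "\<exists>k P. k < n \<and> RR w (nf k P)"
proof (induction w)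
  case Nil
  have "nf 0 (\<lambda>_. False) = []" by (simp add: nf_def Wl_def)
  moreover have "0 < n" using n1 by simp
  ultimately show ?case by (metis rel_cong.refl)
next
  case (Cons x w)
  then obtain k P where kP: "k < n" "RR w (nf k P)" by blast
  show ?case
  proof (cases x)
    case G
    have c: "RR (G # w) (gp (Suc k) @ Wl P 1 (n+1))"
      using rc_app[OF rel_cong.refl[of _ "[G]"] kP(2)] by (simp add: nf_def)
    show ?thesis
    proof (cases "Suc k < n")
      case True
      have "RR (G # w) (nf (Suc k) P)" using c by (simp add: nf_def)
      then show ?thesis using G True by blast
    next
      case False
      then have "Suc k = n" using kP by simp
      then have "RR (gp (Suc k) @ Wl P 1 (n+1)) ([] @ Wl P 1 (n+1))"
        using rc_app[OF rc_gpn rel_cong.refl] by simp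
      then have "RR (G # w) (nf 0 P)" using rel_cong.trans[OF c] by (simp add: nf_def)
      moreover have "0 < n" using n1 by simp
      ultimately show ?thesis using G by blast
    qed
  next
    case E
    let ?W = "Wl P 1 (n+1)"
    have c1: "RR (E # w) ([E] @ gp k @ ?W)"
      using rc_app[OF rel_cong.refl[of _ "[E]"] kP(2)] by (simp add: nf_def)
    have c2: "RR (([E] @ gp k) @ ?W) ((gp k @ Ei (k+1)) @ ?W)"
      by (rule rc_app[OF Ei_shift[OF kP(1)] rel_cong.refl])
    have c3: "RR (gp k @ Ei (k+1) @ ?W) (gp k @ Wl (\<lambda>i. P i \<or> i = k + 1) 1 (n+1) @ [])"
      using rc_app3[OF ins[of 1 "k+1" "n+1" P], of "gp k" "[]"] kP(1) by simp
    have "RR (E # w) (nf k (\<lambda>i. P i \<or> i = k + 1))"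
      using rel_cong.trans[OF rel_cong.trans[OF c1 c2[simplified append_assoc]] c3] by (simp add: nf_def)
    then show ?thesis using E kP(1) by auto
  qed
qed

lemma rot_inv: "k < n \<Longrightarrow> 1 \<le> y \<Longrightarrow> y \<le> n \<Longrightarrow> rot n k (rot n (n - k) y) = y"
  using rot_rot[of n k "n - k" y] rot_multn[of y 1] by simp

lemma rot_inv2: "k < n \<Longrightarrow> 1 \<le> y \<Longrightarrow> y \<le> n \<Longrightarrow> rot n (n - k) (rot n k y) = y"
  using rot_rot[of n "n - k" k y] rot_multn[of y 1] by simp

abbreviation Wall where "Wall \<equiv> Wl (\<lambda>_. True) 1 (n+1)"

lemma sem_empty_iff: "sem n k D = Map.empty \<Longrightarrow> x \<in> {1..n} \<Longrightarrow> x \<notin> D"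
  unfolding sem_def fun_eq_iff by (metis atLeastAtMost_iff option.distinct(1))

lemma nf_empty: "k < n \<Longrightarrow> ev (nf k P) = Map.empty \<Longrightarrow> Wl P 1 (n+1) = Wall"
proof -
  assume k: "k < n" and h: "ev (nf k P) = Map.empty"
  show ?thesis
  proof (rule Wl_cong)
    fix y assume y: "1 \<le> y" "y < n + 1"
    have "rot n (n - k) y \<notin> {x. \<not> P (rot n k x)}"
      using sem_empty_iff[OF h[unfolded ev_nf]] rot_range y by auto
    then show "P y = True" using rot_inv[OF k] y by simp
  qed
qed

lemma G_Wall: "RR ([G] @ Wall) Wall"
proof -
  define X where "X = concat (replicate n ([E] @ gp (n - 1)))"
  obtain k P where kP: "k < n" "RR X (nf k P)" using red by blast
  have "ev X = Map.empty" unfolding X_def using ev_Q4w[of n]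
    by simp (rule sem_empty', auto)
  then have "ev (nf k P) = Map.empty" using sound[OF kP(2)] by simp
  then have w: "Wl P 1 (n+1) = Wall" using nf_empty kP(1) by blast
  have q: "RR ([G] @ X) X" unfolding X_def by (rule rc_Q4)
  have "RR (gp (Suc k) @ Wall) (gp k @ Wall)"
  proof -
    have "RR ([G] @ nf k P) ([G] @ X)" by (rule rc_app[OF rel_cong.refl rel_cong.sym[OF kP(2)]])
    moreover have "RR X (nf k P)" by (rule kP(2))
    ultimately have "RR ([G] @ nf k P) (nf k P)" using q rel_cong.trans by blast
    then show ?thesis unfolding nf_def w by simp
  qed
  then have a: "RR (gp (n - k) @ gp (Suc k) @ Wall) (gp (n - k) @ gp k @ Wall)"
    by (rule rc_app[OF rel_cong.refl])
  have b1: "RR (gp 1 @ Wall) (gp (n - k) @ gp (Suc k) @ Wall)"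
  proof -
    have e: "n - k + Suc k = 1 + n" using kP(1) by simp
    have "1 mod n = (n - k + Suc k) mod n" unfolding e by (rule mod_add_self2[symmetric])
    from rc_app[OF rc_gp_mod[OF this] rel_cong.refl[of _ Wall]] show ?thesis by (simp only: gp_add)
  qed
  have b2: "RR (gp (n - k) @ gp k @ Wall) (gp 0 @ Wall)"
  proof -
    have "(n - k + k) mod n = 0 mod n" using kP(1) by simp
    from rc_app[OF rc_gp_mod[OF this] rel_cong.refl[of _ Wall]] show ?thesis by (simp only: gp_add)
  qed
  show ?thesis using rel_cong.trans[OF rel_cong.trans[OF b1 a] b2] by simp
qed

lemma gp_Wall: "RR (gp k @ Wall) Wall"
proof (induction k)
  case 0 then show ?case by (simp add: rel_cong.refl)
next
  case (Suc k)
  have eq: "gp k @ [G] @ Wall = gp (Suc k) @ Wall"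
    by (metis append.assoc replicate_Suc replicate_append_same)
  have "RR (gp (Suc k) @ Wall) (gp k @ Wall)"
    by (subst eq[symmetric]) (rule rc_app[OF rel_cong.refl G_Wall])
  then show ?case using Suc rel_cong.trans by blast
qed

lemma rot_cancel: "k < n \<Longrightarrow> k' < n \<Longrightarrow> rot n k x = rot n k' x \<Longrightarrow> k = k'"
proof -
  assume a: "k < n" "k' < n" "rot n k x = rot n k' x"
  then have "[x - 1 + k = x - 1 + k'] (mod n)" unfolding rot_def cong_def by simp
  then have "[k = k'] (mod n)" by (simp add: cong_add_lcancel_nat)
  then show ?thesis using a unfolding cong_def by simp
qed

lemma nf_unique: "k < n \<Longrightarrow> k' < n \<Longrightarrow> ev (nf k P) = ev (nf k' P') \<Longrightarrow> RR (nf k P) (nf k' P')"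
proof -
  assume k: "k < n" "k' < n" and h: "ev (nf k P) = ev (nf k' P')"
  have h': "sem n k {x. \<not> P (rot n k x)} = sem n k' {x. \<not> P' (rot n k' x)}" using h by (simp add: ev_nf)
  show ?thesis
  proof (cases "ev (nf k P) = Map.empty")
    case True
    then have w1: "Wl P 1 (n+1) = Wall" using nf_empty k by blast
    have w2: "Wl P' 1 (n+1) = Wall" using nf_empty[OF k(2)] True h by simp
    show ?thesis unfolding nf_def w1 w2 using gp_Wall[of k] rel_cong.sym[OF gp_Wall[of k']] by (rule rel_cong.trans)
  next
    case False
    then obtain x where x: "sem n k {x. \<not> P (rot n k x)} x \<noteq> None" by (auto simp: ev_nf fun_eq_iff)
    then have xin: "1 \<le> x" "x \<le> n" "\<not> P (rot n k x)" unfolding sem_def by (auto split: if_splits)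
    have "sem n k' {x. \<not> P' (rot n k' x)} x \<noteq> None" using x h' by simp
    then have "\<not> P' (rot n k' x)" unfolding sem_def by (auto split: if_splits)
    have "Some (rot n k x) = Some (rot n k' x)"
      using fun_cong[OF h', of x] xin \<open>\<not> P' (rot n k' x)\<close> unfolding sem_def by simp
    then have kk: "k = k'" using rot_cancel k by simp
    have "Wl P 1 (n+1) = Wl P' 1 (n+1)"
    proof (rule Wl_cong)
      fix y assume y: "1 \<le> y" "y < n + 1"
      let ?z = "rot n (n - k) y"
      have z: "1 \<le> ?z" "?z \<le> n" using rot_range by auto
      have "(sem n k {x. \<not> P (rot n k x)} ?z = None) = (sem n k {x. \<not> P' (rot n k x)} ?z = None)"
        using h' kk by simp
      moreover have "rot n k ?z = y" using rot_inv[OF k(1)] y by simp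
      ultimately show "P y = P' y" using z unfolding sem_def by (auto split: if_splits)
    qed
    then show ?thesis unfolding nf_def kk by (simp add: rel_cong.refl)
  qed
qed

end


context CIn begin

lemma ppow_sem: "ppow n (gperm n) m = sem n m UNIV"
proof (induction m)
  case 0 then show ?case by (simp add: pid_sem)
next
  case (Suc m) then show ?case by (simp add: gperm_sem pcomp_sem)
qed

lemma rot_inj: "1 \<le> x \<Longrightarrow> x \<le> n \<Longrightarrow> 1 \<le> y \<Longrightarrow> y \<le> n \<Longrightarrow> rot n k x = rot n k y \<Longrightarrow> x = y"
proof -
  assume a: "1 \<le> x" "x \<le> n" "1 \<le> y" "y \<le> n" "rot n k x = rot n k y"
  then have "[x - 1 + k = y - 1 + k] (mod n)" unfolding rot_def cong_def by simp
  then have "[x - 1 = y - 1] (mod n)" by (simp add: cong_add_rcancel_nat)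
  then show ?thesis using a unfolding cong_def by simp
qed

lemma dom_sem: "dom (sem n k D) = D \<inter> {1..n}"
  unfolding sem_def dom_def by auto

lemma sem_CI: "sem n k D \<in> CI n"
proof -
  have "sem n k D \<in> sym_inv n"
    unfolding sym_inv_def
  proof (intro CollectI conjI)
    show "dom (sem n k D) \<subseteq> {1..n}" by (auto simp: dom_sem)
    show "ran (sem n k D) \<subseteq> {1..n}" using rot_range unfolding sem_def ran_def by (auto split: if_splits)
    show "inj_on (sem n k D) (dom (sem n k D))"
      unfolding inj_on_def dom_sem sem_def using rot_inj by auto
  qed
  moreover have "ppow n (gperm n) (k mod n) \<in> cyc n"
    unfolding cyc_def using n1 by auto
  moreover have "sem n k D = ppow n (gperm n) (k mod n) |` dom (sem n k D)"
    unfolding ppow_sem dom_sem by (auto simp: fun_eq_iff restrict_map_def sem_def rot_mod[symmetric])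
  ultimately show ?thesis unfolding CI_def by blast
qed

lemma range_ev: "CI n = range ev"
proof
  show "range ev \<subseteq> CI n"
  proof
    fix a assume "a \<in> range ev"
    then obtain w where "a = ev w" by blast
    moreover obtain k D where "ev w = sem n k D" using ev_sem by blast
    ultimately show "a \<in> CI n" using sem_CI by simp
  qed
next
  show "CI n \<subseteq> range ev"
  proof
    fix a assume a: "a \<in> CI n"
    then obtain s where s: "s \<in> cyc n" "a = s |` dom a" and si: "a \<in> sym_inv n" unfolding CI_def by blast
    then obtain k where k: "k < n" "s = sem n k UNIV" unfolding cyc_def by (auto simp: ppow_sem)
    have d: "dom a \<subseteq> {1..n}" using si unfolding sym_inv_def by blast
    have a2: "a = sem n k (dom a)"
      using s(2) d unfolding k(2) by (auto simp: fun_eq_iff restrict_map_def sem_def)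
    define P where "P y = (rot n (n - k) y \<notin> dom a)" for y
    have "ev (nf k P) = sem n k (dom a)"
      unfolding ev_nf P_def using rot_inv2[OF k(1)]
      by (intro sem_eq) auto
    then show "a \<in> range ev" using a2 by (metis rangeI)
  qed
qed

lemma main: "defines_monoid (set (Qlist n)) (CI n) pcomp (pid n) (phiCI n)"
  unfolding defines_monoid_def
proof (intro conjI allI)
  show "inj (phiCI n)"
  proof (rule injI)
    fix x y assume h: "phiCI n x = phiCI n y"
    have "gperm n 1 \<noteq> e1 n 1" using n1 unfolding gperm_def e1_def by auto
    then show "x = y" using h by (cases x; cases y) (auto simp: phiCI_def)
  qed
  show "CI n = range ev" by (rule range_ev)
  fix u v
  show "(ev u = ev v) = RR u v"
  proof
    assume h: "ev u = ev v"
    obtain k P where kP: "k < n" "RR u (nf k P)" using red by blast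
    obtain k' P' where kP': "k' < n" "RR v (nf k' P')" using red by blast
    have "ev (nf k P) = ev (nf k' P')" using h sound[OF kP(2)] sound[OF kP'(2)] by simp
    then have "RR (nf k P) (nf k' P')" using nf_unique kP(1) kP'(1) by blast
    then show "RR u v" using kP(2) rel_cong.sym[OF kP'(2)] by (blast intro: rel_cong.trans)
  qed (rule sound)
qed

end

lemma card_gen: "card (UNIV :: gen set) = 2"
proof -
  have e: "(UNIV :: gen set) = {G, E}" using gen.exhaust by auto
  have "card {G, E} = 2" by simp
  then show ?thesis by (simp only: e)
qed

lemma len1: "length (concat (map (\<lambda>i. map (f i) [i+1..<n+1]) [1..<n+1])) = (\<Sum>i\<in>{1..<n+1}. n - i)"
  by (simp only: length_concat map_map comp_def length_map length_upt diff_add_eq_diff_diff_swap) (simp only: sum_set_upt_conv_sum_list_nat[symmetric] set_upt, rule sum.cong, simp, simp)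
lemma len2: "2 * (\<Sum>i\<in>{1..<n+1}. n - i) = n^2 - (n::nat)"
proof (induction n)
  case 0 then show ?case by simp
next
  case (Suc n)
  have "(\<Sum>i\<in>{1..<Suc n+1}. Suc n - i) = (\<Sum>i\<in>{1..<n+1}. Suc n - i) + 0"
    by simp
  also have "(\<Sum>i\<in>{1..<n+1}. Suc n - i) = (\<Sum>i\<in>{1..<n+1}. (n - i) + 1)"
    by (rule sum.cong) auto
  also have "\<dots> = (\<Sum>i\<in>{1..<n+1}. n - i) + n" by (simp only: sum.distrib sum_constant card_atLeastLessThan) simp
  finally have "(\<Sum>i\<in>{1..<Suc n+1}. Suc n - i) = (\<Sum>i\<in>{1..<n+1}. n - i) + n" by simp
  then show ?case using Suc by (simp add: power2_eq_square algebra_simps)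
qed

theorem theorem2p7:
  fixes n :: nat
  assumes "n \<ge> 1"
  shows "defines_monoid (set (Qlist n)) (CI n) pcomp (pid n) (phiCI n)
         \<and> card (UNIV :: gen set) = 2
         \<and> 2 * length (Qlist n) = n ^ 2 - n + 6"
proof (intro conjI)
  interpret CIn n using assms by unfold_locales
  show "defines_monoid (set (Qlist n)) (CI n) pcomp (pid n) (phiCI n)" by (rule main)
  show "card (UNIV :: gen set) = 2" by (rule card_gen)
  have "length (Qlist n) = 3 + length [Q3rel n i j. i \<leftarrow> [1..<n+1], j \<leftarrow> [i+1..<n+1]]"
    unfolding Qlist_def by (simp only: length_append list.size)
  also have "\<dots> = 3 + (\<Sum>i\<in>{1..<n+1}. n - i)" using len1[of "Q3rel n" n] by simp
  finally have "length (Qlist n) = 3 + (\<Sum>i\<in>{1..<n+1}. n - i)" .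
  moreover have "n \<le> n ^ 2" by (simp add: power2_eq_square)
  ultimately show "2 * length (Qlist n) = n ^ 2 - n + 6" using len2[of n] by simp
qed

end
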